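(* Let $T$ be a commutative ring with identity, $S$ a unital subring and $I$ a nil ideal of $T$ with $T=S+I$ and $S\cap I=\{0\}$. If $S$ is roughly complemented and $I$ is an atorsion $S$-module, then $T$ is roughly complemented. If furthermore $I^2=0$, then the converse holds. In particular, for a commutative ring $R$ and $R$-module $M$, $R\propto M$ is roughly complemented if and only if $R$ is roughly complemented and $M$ is an atorsion $R$-module.
   Context: For a ring $A$: $\mathfrak{N}(A)$ is the nilradical, $\mathrm{reg}(A)$ the regular elements, $\mathrm{areg}(A)=\{x: x+\mathfrak{N}(A)\in\mathrm{reg}(A/\mathfrak{N}(A))\}$. $A$ is roughly complemented if for every $a\in A$ there is $b$ with $ab=0$ and $a+b\in\mathrm{areg}(A)$. An $A$-module $M$ is atorsion if for each $m\in M$ there is $r\in\mathrm{areg}(A)$ with $rm=0$. $R\propto M$ is $R\times M$ with coordinatewise addition and $(r,m)(s,n)=(rs,rn+sm)$. *)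

theory Defs
  imports "HOL-Algebra.Algebra"
begin

definition nilradical :: "('a, 'b) ring_scheme \<Rightarrow> 'a set" where
  "nilradical A = {x \<in> carrier A. \<exists>n::nat. x [^]\<^bsub>A\<^esub> n = \<zero>\<^bsub>A\<^esub>}"

definition reg :: "('a, 'b) ring_scheme \<Rightarrow> 'a set" where
  "reg A = {x \<in> carrier A. \<forall>y \<in> carrier A. x \<otimes>\<^bsub>A\<^esub> y = \<zero>\<^bsub>A\<^esub> \<longrightarrow> y = \<zero>\<^bsub>A\<^esub>}"

definition areg :: "('a, 'b) ring_scheme \<Rightarrow> 'a set" where
  "areg A = {x \<in> carrier A. nilradical A +>\<^bsub>A\<^esub> x \<in> reg (A Quot nilradical A)}"

definition roughly_complemented :: "('a, 'b) ring_scheme \<Rightarrow> bool" where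
  "roughly_complemented A \<longleftrightarrow>
     (\<forall>a \<in> carrier A. \<exists>b \<in> carrier A. a \<otimes>\<^bsub>A\<^esub> b = \<zero>\<^bsub>A\<^esub> \<and> a \<oplus>\<^bsub>A\<^esub> b \<in> areg A)"

definition atorsion :: "('a, 'c) ring_scheme \<Rightarrow> ('a, 'b, 'd) module_scheme \<Rightarrow> bool" where
  "atorsion A M \<longleftrightarrow> (\<forall>m \<in> carrier M. \<exists>r \<in> areg A. r \<odot>\<^bsub>M\<^esub> m = \<zero>\<^bsub>M\<^esub>)"

text \<open>An ideal I of T regarded as a module over a subring S of T (action = multiplication in T).\<close>
definition ideal_as_module :: "('a, 'b) ring_scheme \<Rightarrow> 'a set \<Rightarrow> ('a, 'a) module" where
  "ideal_as_module T I = \<lparr>carrier = I, monoid.mult = monoid.mult T, one = one T, ring.zero = ring.zero T,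
                           ring.add = ring.add T, smult = monoid.mult T\<rparr>"

definition idealization :: "('a, 'c) ring_scheme \<Rightarrow> ('a, 'b, 'd) module_scheme \<Rightarrow> ('a \<times> 'b) ring" where
  "idealization R M = \<lparr>carrier = carrier R \<times> carrier M,
     monoid.mult = (\<lambda>(r, m) (s, n). (r \<otimes>\<^bsub>R\<^esub> s, (r \<odot>\<^bsub>M\<^esub> n) \<oplus>\<^bsub>M\<^esub> (s \<odot>\<^bsub>M\<^esub> m))),
     one = (\<one>\<^bsub>R\<^esub>, \<zero>\<^bsub>M\<^esub>),
     ring.zero = (\<zero>\<^bsub>R\<^esub>, \<zero>\<^bsub>M\<^esub>),
     ring.add = (\<lambda>(r, m) (s, n). (r \<oplus>\<^bsub>R\<^esub> s, m \<oplus>\<^bsub>M\<^esub> n))\<rparr>"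

end

theory Submission
  imports Defs
begin


lemma pow_carrier_update: "x [^]\<^bsub>A\<lparr>carrier := S\<rparr>\<^esub> (n::nat) = x [^]\<^bsub>A\<^esub> n"
  by (induct n) simp_all

context cring begin

lemma nil_mult: assumes "x \<in> nilradical R" "r \<in> carrier R" shows "r \<otimes> x \<in> nilradical R"
proof -
  from assms obtain n where x: "x \<in> carrier R" "x [^] (n::nat) = \<zero>" unfolding nilradical_def by auto
  have "(r \<otimes> x) [^] n = r [^] n \<otimes> x [^] n" using x assms(2) by (simp add: nat_pow_distrib)
  also have "\<dots> = \<zero>" using x assms(2) by simp
  finally show ?thesis using x assms unfolding nilradical_def by auto
qed

lemma nil_add: assumes "x \<in> nilradical R" "y \<in> nilradical R" shows "x \<oplus> y \<in> nilradical R"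
proof -
  from assms obtain n m where x: "x \<in> carrier R" "x [^] (n::nat) = \<zero>"
     and y: "y \<in> carrier R" "y [^] (m::nat) = \<zero>" unfolding nilradical_def by auto
  have "\<exists>c \<in> carrier R. (x \<oplus> y) [^] k = x [^] k \<oplus> y \<otimes> c" for k :: nat
  proof (induct k)
    case 0
    then show ?case using y by (intro bexI[of _ \<zero>]) simp_all
  next
    case (Suc k)
    then obtain c where c: "c \<in> carrier R" "(x \<oplus> y) [^] k = x [^] k \<oplus> y \<otimes> c" by auto
    have "(x \<oplus> y) [^] Suc k = (x [^] k \<oplus> y \<otimes> c) \<otimes> (x \<oplus> y)" using c by simp
    also have "\<dots> = x [^] Suc k \<oplus> y \<otimes> (x [^] k \<oplus> c \<otimes> (x \<oplus> y))"
    proof -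
      define a where "a = x [^] k"
      have a: "a \<in> carrier R" unfolding a_def using x by simp
      have xy: "x \<oplus> y \<in> carrier R" using x y by simp
      have "(a \<oplus> y \<otimes> c) \<otimes> (x \<oplus> y) = a \<otimes> (x \<oplus> y) \<oplus> (y \<otimes> c) \<otimes> (x \<oplus> y)"
        using a xy y c by (simp only: l_distr[of a "y \<otimes> c" "x \<oplus> y"] m_closed)
      also have "\<dots> = (a \<otimes> x \<oplus> a \<otimes> y) \<oplus> y \<otimes> (c \<otimes> (x \<oplus> y))"
        using a x y c xy by (simp only: r_distr[of x y a] m_assoc[of y c "x \<oplus> y"])
      also have "\<dots> = a \<otimes> x \<oplus> (y \<otimes> a \<oplus> y \<otimes> (c \<otimes> (x \<oplus> y)))"
        using a x y c by (simp add: a_assoc m_comm[of a y])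
      also have "\<dots> = a \<otimes> x \<oplus> y \<otimes> (a \<oplus> c \<otimes> (x \<oplus> y))"
        using a x y c by (simp add: r_distr)
      finally show ?thesis unfolding a_def by simp
    qed
    finally show ?case using x y c by (intro bexI[of _ "x [^] k \<oplus> c \<otimes> (x \<oplus> y)"]) simp_all
  qed
  then obtain c where c: "c \<in> carrier R" "(x \<oplus> y) [^] n = x [^] n \<oplus> y \<otimes> c" by blast
  then have c: "c \<in> carrier R" "(x \<oplus> y) [^] n = y \<otimes> c" using x y by simp_all
  have "(x \<oplus> y) [^] (n * m) = ((x \<oplus> y) [^] n) [^] m" using x y by (simp add: nat_pow_pow)
  also have "\<dots> = y [^] m \<otimes> c [^] m" using c y by (simp add: nat_pow_distrib)
  also have "\<dots> = \<zero>" using y c by simp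
  finally show ?thesis using x y unfolding nilradical_def by auto
qed

lemma nil_ideal: "ideal (nilradical R) R"
proof -
  have sub: "subgroup (nilradical R) (add_monoid R)"
  proof (rule add.subgroupI)
    show "nilradical R \<subseteq> carrier R" unfolding nilradical_def by auto
    have "\<zero> [^] (1::nat) = \<zero>" by simp
    then have "\<zero> \<in> nilradical R" unfolding nilradical_def by blast
    then show "nilradical R \<noteq> {}" by blast
    fix a assume a: "a \<in> nilradical R"
    have ac: "a \<in> carrier R" using a unfolding nilradical_def by auto
    have "\<ominus> \<one> \<otimes> a \<in> nilradical R" using a by (intro nil_mult) auto
    moreover have "\<ominus> \<one> \<otimes> a = \<ominus> a" using ac by (simp add: l_minus)
    ultimately show "\<ominus> a \<in> nilradical R" by simp
  next
    fix a b assume a: "a \<in> nilradical R" and b: "b \<in> nilradical R"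
    then show "a \<oplus> b \<in> nilradical R" using nil_add by simp
  qed
  show ?thesis
  proof (rule idealI[OF ring_axioms sub])
    fix a x assume a: "a \<in> nilradical R" and x: "x \<in> carrier R"
    then show "x \<otimes> a \<in> nilradical R" by (rule nil_mult)
    have "a \<in> carrier R" using a unfolding nilradical_def by auto
    then have "a \<otimes> x = x \<otimes> a" using x by (rule m_comm)
    then show "a \<otimes> x \<in> nilradical R" using nil_mult[OF a x] by simp
  qed
qed

lemma areg_char: "areg R = {x \<in> carrier R. \<forall>y \<in> carrier R. x \<otimes> y \<in> nilradical R \<longrightarrow> y \<in> nilradical R}"
proof -
  interpret N: ideal "nilradical R" R by (rule nil_ideal)
  have eqN: "nilradical R +> z = nilradical R \<longleftrightarrow> z \<in> nilradical R" if "z \<in> carrier R" for z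
    using N.a_rcos_const N.a_rcos_self that by metis
  have car: "carrier (R Quot nilradical R) = {nilradical R +> y | y. y \<in> carrier R}"
    unfolding FactRing_def A_RCOSETS_def' by auto
  have mul: "(nilradical R +> x) \<otimes>\<^bsub>R Quot nilradical R\<^esub> (nilradical R +> y) = nilradical R +> (x \<otimes> y)"
    if "x \<in> carrier R" "y \<in> carrier R" for x y
    using that by (simp add: FactRing_def N.rcoset_mult_add)
  have z: "\<zero>\<^bsub>R Quot nilradical R\<^esub> = nilradical R" by (simp add: FactRing_def)
  have key: "(nilradical R +> x \<in> reg (R Quot nilradical R)) \<longleftrightarrow>
      (\<forall>y\<in>carrier R. x \<otimes> y \<in> nilradical R \<longrightarrow> y \<in> nilradical R)" if x: "x \<in> carrier R" for x
  proof -
    have "(nilradical R +> x \<in> reg (R Quot nilradical R)) \<longleftrightarrow>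
      (\<forall>Y\<in>{nilradical R +> y |y. y \<in> carrier R}.
         (nilradical R +> x) \<otimes>\<^bsub>R Quot nilradical R\<^esub> Y = nilradical R \<longrightarrow> Y = nilradical R)"
      unfolding reg_def car z using x by blast
    also have "\<dots> \<longleftrightarrow> (\<forall>y\<in>carrier R.
         (nilradical R +> x) \<otimes>\<^bsub>R Quot nilradical R\<^esub> (nilradical R +> y) = nilradical R
           \<longrightarrow> nilradical R +> y = nilradical R)" by blast
    also have "\<dots> \<longleftrightarrow> (\<forall>y\<in>carrier R. x \<otimes> y \<in> nilradical R \<longrightarrow> y \<in> nilradical R)"
      using x mul eqN by (simp del: m_comm)
    finally show ?thesis .
  qed
  show ?thesis unfolding areg_def using key by blast
qed

lemma nil_sq: assumes "x \<in> carrier R" "x \<otimes> x \<in> nilradical R" shows "x \<in> nilradical R"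
proof -
  obtain n where n: "(x \<otimes> x) [^] (n::nat) = \<zero>" using assms unfolding nilradical_def by auto
  have "(x \<otimes> x) [^] n = x [^] (n + n)" using assms by (simp add: nat_pow_distrib nat_pow_mult)
  then show ?thesis using n assms unfolding nilradical_def by auto
qed

lemma mm_swap: "\<lbrakk>a \<in> carrier R; b \<in> carrier R; c \<in> carrier R; d \<in> carrier R\<rbrakk>
  \<Longrightarrow> (a \<otimes> b) \<otimes> (c \<otimes> d) = (a \<otimes> c) \<otimes> (b \<otimes> d)"
  by (simp add: m_assoc m_lcomm[of b c])

lemma areg_combine:
  assumes s: "s \<in> carrier R" and s': "s' \<in> carrier R" and r: "r \<in> carrier R"
    and ss: "s \<otimes> s' = \<zero>" and sa: "s \<oplus> s' \<in> areg R" and ra: "r \<in> areg R"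
  shows "s \<oplus> s' \<otimes> r \<in> areg R"
proof -
  interpret N: ideal "nilradical R" R by (rule nil_ideal)
  have "y \<in> nilradical R" if y: "y \<in> carrier R" and h: "(s \<oplus> s' \<otimes> r) \<otimes> y \<in> nilradical R" for y
  proof -
    define u where "u = s \<otimes> y"
    define w where "w = s' \<otimes> (r \<otimes> y)"
    have u: "u \<in> carrier R" and w: "w \<in> carrier R" unfolding u_def w_def using s s' r y by auto
    have "(s \<oplus> s' \<otimes> r) \<otimes> y = s \<otimes> y \<oplus> (s' \<otimes> r) \<otimes> y"
      using s s' r y by (simp only: l_distr[of s "s' \<otimes> r" y] m_closed)
    then have p: "(s \<oplus> s' \<otimes> r) \<otimes> y = u \<oplus> w" unfolding u_def w_def using s' r y by (simp add: m_assoc)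
    have uw: "u \<otimes> w = \<zero>" unfolding u_def w_def using s s' r y ss by (simp add: mm_swap)
    have wu: "w \<otimes> u = \<zero>" using uw u w by (simp add: m_comm)
    have "u \<otimes> (u \<oplus> w) \<in> nilradical R" using N.I_l_closed[OF h u] p by simp
    moreover have "u \<otimes> (u \<oplus> w) = u \<otimes> u" using u w uw by (simp add: r_distr)
    ultimately have "u \<otimes> u \<in> nilradical R" by simp
    then have 1: "u \<in> nilradical R" using nil_sq[OF u] by blast
    have "w \<otimes> (u \<oplus> w) \<in> nilradical R" using N.I_l_closed[OF h w] p by simp
    moreover have "w \<otimes> (u \<oplus> w) = w \<otimes> w" using u w wu by (simp add: r_distr)
    ultimately have "w \<otimes> w \<in> nilradical R" by simp
    then have "w \<in> nilradical R" using nil_sq[OF w] by blast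
    moreover have "w = r \<otimes> (s' \<otimes> y)" unfolding w_def using m_lcomm[OF s' r y] .
    ultimately have "r \<otimes> (s' \<otimes> y) \<in> nilradical R" by simp
    moreover have "\<forall>z\<in>carrier R. r \<otimes> z \<in> nilradical R \<longrightarrow> z \<in> nilradical R"
      using ra unfolding areg_char by blast
    ultimately have 2: "s' \<otimes> y \<in> nilradical R" using s' y by blast
    have "(s \<oplus> s') \<otimes> y = u \<oplus> s' \<otimes> y" unfolding u_def using s s' y by (simp only: l_distr)
    then have "(s \<oplus> s') \<otimes> y \<in> nilradical R" using 1 2 by (simp add: N.a_closed)
    moreover have "\<forall>z\<in>carrier R. (s \<oplus> s') \<otimes> z \<in> nilradical R \<longrightarrow> z \<in> nilradical R"
      using sa unfolding areg_char by blast
    ultimately show ?thesis using y by blast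
  qed
  moreover have "s \<oplus> s' \<otimes> r \<in> carrier R" using s s' r by simp
  ultimately show ?thesis unfolding areg_char by blast
qed

end


lemma rc_sub: "roughly_complemented (T\<lparr>carrier := S\<rparr>) \<longleftrightarrow>
   (\<forall>a\<in>S. \<exists>b\<in>S. a \<otimes>\<^bsub>T\<^esub> b = \<zero>\<^bsub>T\<^esub> \<and> a \<oplus>\<^bsub>T\<^esub> b \<in> areg (T\<lparr>carrier := S\<rparr>))"
  by (simp add: roughly_complemented_def)

lemma at_sub: "atorsion (T\<lparr>carrier := S\<rparr>) (ideal_as_module T I) \<longleftrightarrow>
   (\<forall>m\<in>I. \<exists>r\<in>areg (T\<lparr>carrier := S\<rparr>). r \<otimes>\<^bsub>T\<^esub> m = \<zero>\<^bsub>T\<^esub>)"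
  by (simp add: atorsion_def ideal_as_module_def)

locale decomp = cring T for T (structure) +
  fixes S I
  assumes sub: "subring S T" and id: "ideal I T" and nil: "I \<subseteq> nilradical T"
    and car: "carrier T = S <+> I" and inter: "S \<inter> I = {\<zero>}"
begin

lemma S_car: "S \<subseteq> carrier T" using subringE(1)[OF sub] .
lemma I_car: "I \<subseteq> carrier T" using ideal.axioms(1)[OF id] additive_subgroup.a_subset by blast

lemma crS: "cring (T\<lparr>carrier := S\<rparr>)"
  using subcring_iff[OF S_car] subcringI'[OF sub] by blast

lemma nilS: "nilradical (T\<lparr>carrier := S\<rparr>) = nilradical T \<inter> S"
  unfolding nilradical_def using S_car by (auto simp: pow_carrier_update)

lemma aregS: "areg (T\<lparr>carrier := S\<rparr>) = {x \<in> S. \<forall>y\<in>S. x \<otimes> y \<in> nilradical T \<longrightarrow> y \<in> nilradical T}"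
proof -
  have "areg (T\<lparr>carrier := S\<rparr>) = {x \<in> S. \<forall>y\<in>S. x \<otimes> y \<in> nilradical T \<inter> S \<longrightarrow> y \<in> nilradical T \<inter> S}"
    using cring.areg_char[OF crS] unfolding nilS by simp
  also have "\<dots> = {x \<in> S. \<forall>y\<in>S. x \<otimes> y \<in> nilradical T \<longrightarrow> y \<in> nilradical T}"
    using subringE(6)[OF sub] by blast
  finally show ?thesis .
qed

lemma decompose: assumes "t \<in> carrier T" obtains s i where "s \<in> S" "i \<in> I" "t = s \<oplus> i"
  using assms unfolding car set_add_def' by blast

lemma unique0: assumes "s \<in> S" "i \<in> I" "s \<oplus> i = \<zero>" shows "s = \<zero>" "i = \<zero>"
proof -
  have sc: "s \<in> carrier T" and ic: "i \<in> carrier T" using assms S_car I_car by auto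
  have "\<ominus> i = s" using minus_equality[OF assms(3) ic sc] .
  moreover have "\<ominus> i \<in> I" using assms(2) id by (simp add: additive_subgroup.a_inv_closed ideal.axioms(1))
  ultimately have "s \<in> S \<inter> I" using assms(1) by simp
  then show "s = \<zero>" using inter by blast
  then show "i = \<zero>" using assms(3) ic by simp
qed

lemma sub_cancel: assumes "a \<in> carrier T" "b \<in> carrier T" shows "(a \<oplus> b) \<oplus> \<ominus> b = a"
  using assms by (simp add: a_assoc r_neg)

lemma key: assumes s: "s \<in> S" and i: "i \<in> I"
  shows "s \<oplus> i \<in> areg T \<longleftrightarrow> s \<in> areg (T\<lparr>carrier := S\<rparr>)"
proof -
  interpret N: ideal "nilradical T" T by (rule nil_ideal)
  interpret J: ideal I T by (rule id)
  have sc: "s \<in> carrier T" and ic: "i \<in> carrier T" using s i S_car I_car by auto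
  show ?thesis
  proof
    assume h: "s \<oplus> i \<in> areg T"
    have hh: "\<forall>y\<in>carrier T. (s \<oplus> i) \<otimes> y \<in> nilradical T \<longrightarrow> y \<in> nilradical T"
      using h unfolding areg_char by blast
    have "y \<in> nilradical T" if y: "y \<in> S" "s \<otimes> y \<in> nilradical T" for y
    proof -
      have yc: "y \<in> carrier T" using y S_car by auto
      have "(s \<oplus> i) \<otimes> y = s \<otimes> y \<oplus> i \<otimes> y" using sc ic yc by (rule l_distr)
      moreover have "i \<otimes> y \<in> nilradical T" using J.I_r_closed[OF i yc] nil by blast
      ultimately have "(s \<oplus> i) \<otimes> y \<in> nilradical T" using y(2) by (simp add: N.a_closed)
      then show ?thesis using hh yc by blast
    qed
    then show "s \<in> areg (T\<lparr>carrier := S\<rparr>)" unfolding aregS using s by blast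
  next
    assume h: "s \<in> areg (T\<lparr>carrier := S\<rparr>)"
    have hh: "\<forall>y\<in>S. s \<otimes> y \<in> nilradical T \<longrightarrow> y \<in> nilradical T" using h unfolding aregS by blast
    have "y \<in> nilradical T" if y: "y \<in> carrier T" "(s \<oplus> i) \<otimes> y \<in> nilradical T" for y
    proof -
      obtain s2 i2 where d: "s2 \<in> S" "i2 \<in> I" "y = s2 \<oplus> i2" using decompose[OF y(1)] by blast
      have s2c: "s2 \<in> carrier T" and i2c: "i2 \<in> carrier T" using d S_car I_car by auto
      define j where "j = s \<otimes> i2 \<oplus> i \<otimes> y"
      have jI: "j \<in> I" unfolding j_def using J.I_l_closed[OF d(2) sc] J.I_r_closed[OF i y(1)]
        by (simp add: J.a_closed)
      have jc: "j \<in> carrier T" using jI I_car by auto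
      have "(s \<oplus> i) \<otimes> y = s \<otimes> y \<oplus> i \<otimes> y" using sc ic y(1) by (rule l_distr)
      also have "s \<otimes> y = s \<otimes> s2 \<oplus> s \<otimes> i2" unfolding d(3) using r_distr[OF s2c i2c sc] .
      finally have "(s \<oplus> i) \<otimes> y = s \<otimes> s2 \<oplus> j" unfolding j_def using sc s2c i2c ic y(1)
        by (simp add: a_assoc)
      then have "s \<otimes> s2 \<oplus> j \<in> nilradical T" using y(2) by simp
      moreover have "\<ominus> j \<in> nilradical T" using jI nil by (simp add: N.a_inv_closed subsetD)
      ultimately have "(s \<otimes> s2 \<oplus> j) \<oplus> \<ominus> j \<in> nilradical T" by (simp add: N.a_closed)
      then have "s \<otimes> s2 \<in> nilradical T" using sub_cancel[of "s \<otimes> s2" j] sc s2c jc by simp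
      then have "s2 \<in> nilradical T" using hh d(1) by blast
      moreover have "i2 \<in> nilradical T" using d(2) nil by blast
      ultimately show ?thesis using d(3) by (simp add: N.a_closed)
    qed
    moreover have "s \<oplus> i \<in> carrier T" using sc ic by simp
    ultimately show "s \<oplus> i \<in> areg T" unfolding areg_char by blast
  qed
qed


lemma forward:
  assumes rcS: "roughly_complemented (T\<lparr>carrier := S\<rparr>)"
    and at: "atorsion (T\<lparr>carrier := S\<rparr>) (ideal_as_module T I)"
  shows "roughly_complemented T"
  unfolding roughly_complemented_def
proof
  interpret J: ideal I T by (rule id)
  fix a assume a: "a \<in> carrier T"
  obtain s i where d: "s \<in> S" "i \<in> I" "a = s \<oplus> i" using decompose[OF a] by blast
  have sc: "s \<in> carrier T" and ic: "i \<in> carrier T" using d S_car I_car by auto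
  obtain s' where s': "s' \<in> S" "s \<otimes> s' = \<zero>" "s \<oplus> s' \<in> areg (T\<lparr>carrier := S\<rparr>)"
    using rcS d(1) unfolding rc_sub by blast
  have s'c: "s' \<in> carrier T" using s' S_car by auto
  have mI: "i \<otimes> s' \<in> I" using J.I_r_closed[OF d(2) s'c] .
  obtain r where r: "r \<in> areg (T\<lparr>carrier := S\<rparr>)" "r \<otimes> (i \<otimes> s') = \<zero>"
    using at mI unfolding at_sub by blast
  have rS: "r \<in> S" using r(1) unfolding aregS by blast
  have rc: "r \<in> carrier T" using rS S_car by auto
  have "(s \<oplus> i) \<otimes> (s' \<otimes> r) = s \<otimes> (s' \<otimes> r) \<oplus> i \<otimes> (s' \<otimes> r)"
    using l_distr[OF sc ic m_closed[OF s'c rc]] .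
  also have "s \<otimes> (s' \<otimes> r) = \<zero>" using s'(2) sc s'c rc by (simp add: m_assoc[symmetric])
  also have "i \<otimes> (s' \<otimes> r) = r \<otimes> (i \<otimes> s')"
    using ic s'c rc by (simp add: m_assoc[symmetric] m_comm[of _ r])
  also have "\<dots> = \<zero>" using r(2) .
  finally have ab: "a \<otimes> (s' \<otimes> r) = \<zero>" using d(3) by simp
  have comb: "s \<oplus> s' \<otimes> r \<in> areg (T\<lparr>carrier := S\<rparr>)"
    using cring.areg_combine[OF crS, of s s' r] d(1) s' rS r(1) by simp
  have "s \<oplus> s' \<otimes> r \<in> S" using subringE(6,7)[OF sub] d(1) s'(1) rS by blast
  then have "(s \<oplus> s' \<otimes> r) \<oplus> i \<in> areg T" using key[OF _ d(2)] comb by blast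
  moreover have "(s \<oplus> s' \<otimes> r) \<oplus> i = a \<oplus> s' \<otimes> r" unfolding d(3)
    using sc ic s'c rc by (simp add: a_ac)
  ultimately have "a \<oplus> s' \<otimes> r \<in> areg T" by simp
  then show "\<exists>b\<in>carrier T. a \<otimes> b = \<zero> \<and> a \<oplus> b \<in> areg T" using ab s'c rc by blast
qed

lemma backward:
  assumes I2: "\<forall>x\<in>I. \<forall>y\<in>I. x \<otimes> y = \<zero>" and rcT: "roughly_complemented T"
  shows "roughly_complemented (T\<lparr>carrier := S\<rparr>) \<and> atorsion (T\<lparr>carrier := S\<rparr>) (ideal_as_module T I)"
proof
  interpret J: ideal I T by (rule id)
  have rcT': "\<forall>a\<in>carrier T. \<exists>b\<in>carrier T. a \<otimes> b = \<zero> \<and> a \<oplus> b \<in> areg T"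
    using rcT unfolding roughly_complemented_def by blast
  show "roughly_complemented (T\<lparr>carrier := S\<rparr>)" unfolding rc_sub
  proof
    fix a assume a: "a \<in> S"
    have ac: "a \<in> carrier T" using a S_car by auto
    obtain b where b: "b \<in> carrier T" "a \<otimes> b = \<zero>" "a \<oplus> b \<in> areg T" using rcT' ac by blast
    obtain s' i' where d: "s' \<in> S" "i' \<in> I" "b = s' \<oplus> i'" using decompose[OF b(1)] by blast
    have s'c: "s' \<in> carrier T" and i'c: "i' \<in> carrier T" using d S_car I_car by auto
    have "a \<otimes> s' \<oplus> a \<otimes> i' = \<zero>" using b(2) r_distr[OF s'c i'c ac] d(3) by simp
    then have as: "a \<otimes> s' = \<zero>" using unique0[of "a \<otimes> s'" "a \<otimes> i'"] subringE(6)[OF sub] a d(1)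
      J.I_l_closed[OF d(2) ac] by blast
    have "a \<oplus> b = (a \<oplus> s') \<oplus> i'" using d(3) ac s'c i'c by (simp add: a_assoc)
    then have "(a \<oplus> s') \<oplus> i' \<in> areg T" using b(3) by simp
    moreover have "a \<oplus> s' \<in> S" using subringE(7)[OF sub] a d(1) by blast
    ultimately have "a \<oplus> s' \<in> areg (T\<lparr>carrier := S\<rparr>)" using key[OF _ d(2)] by blast
    then show "\<exists>b\<in>S. a \<otimes> b = \<zero> \<and> a \<oplus> b \<in> areg (T\<lparr>carrier := S\<rparr>)" using as d(1) by blast
  qed
  show "atorsion (T\<lparr>carrier := S\<rparr>) (ideal_as_module T I)" unfolding at_sub
  proof
    fix m assume m: "m \<in> I"
    have mc: "m \<in> carrier T" using m I_car by auto
    obtain b where b: "b \<in> carrier T" "m \<otimes> b = \<zero>" "m \<oplus> b \<in> areg T" using rcT' mc by blast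
    obtain s' i' where d: "s' \<in> S" "i' \<in> I" "b = s' \<oplus> i'" using decompose[OF b(1)] by blast
    have s'c: "s' \<in> carrier T" and i'c: "i' \<in> carrier T" using d S_car I_car by auto
    have "m \<otimes> s' \<oplus> m \<otimes> i' = \<zero>" using b(2) r_distr[OF s'c i'c mc] d(3) by simp
    moreover have "m \<otimes> i' = \<zero>" using I2 m d(2) by blast
    ultimately have ms: "m \<otimes> s' = \<zero>" using mc s'c by simp
    have "m \<oplus> b = s' \<oplus> (m \<oplus> i')" using d(3) mc s'c i'c by (simp add: a_ac)
    moreover have "m \<oplus> i' \<in> I" using m d(2) by (simp add: J.a_closed)
    ultimately have "s' \<in> areg (T\<lparr>carrier := S\<rparr>)" using key[OF d(1)] b(3) by auto
    moreover have "s' \<otimes> m = \<zero>" using ms mc s'c by (simp add: m_comm)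
    ultimately show "\<exists>r\<in>areg (T\<lparr>carrier := S\<rparr>). r \<otimes> m = \<zero>" by blast
  qed
qed

end


context module begin

abbreviation ID where "ID \<equiv> idealization R M"

lemma ID_carrier: "carrier ID = carrier R \<times> carrier M"
  by (simp add: idealization_def)
lemma ID_mult: "p \<otimes>\<^bsub>ID\<^esub> q = (fst p \<otimes> fst q, fst p \<odot>\<^bsub>M\<^esub> snd q \<oplus>\<^bsub>M\<^esub> fst q \<odot>\<^bsub>M\<^esub> snd p)"
  by (cases p; cases q) (simp add: idealization_def)
lemma ID_add: "p \<oplus>\<^bsub>ID\<^esub> q = (fst p \<oplus> fst q, snd p \<oplus>\<^bsub>M\<^esub> snd q)"
  by (cases p; cases q) (simp add: idealization_def)
lemma ID_one: "\<one>\<^bsub>ID\<^esub> = (\<one>, \<zero>\<^bsub>M\<^esub>)"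
  by (simp add: idealization_def)
lemma ID_zero: "\<zero>\<^bsub>ID\<^esub> = (\<zero>, \<zero>\<^bsub>M\<^esub>)"
  by (simp add: idealization_def)

lemmas ID_simps = ID_carrier ID_mult ID_add ID_one ID_zero

lemma ID_cring: "cring ID"
proof (rule cringI)
  show "abelian_group ID"
  proof (rule abelian_groupI)
    fix x y z assume x: "x \<in> carrier ID" and y: "y \<in> carrier ID" and z: "z \<in> carrier ID"
    then show "x \<oplus>\<^bsub>ID\<^esub> y \<oplus>\<^bsub>ID\<^esub> z = x \<oplus>\<^bsub>ID\<^esub> (y \<oplus>\<^bsub>ID\<^esub> z)"
      by (auto simp: ID_simps R.a_assoc M.a_assoc)
  next
    fix x y assume x: "x \<in> carrier ID" and y: "y \<in> carrier ID"
    then show "x \<oplus>\<^bsub>ID\<^esub> y \<in> carrier ID" by (auto simp: ID_simps)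
    from x y show "x \<oplus>\<^bsub>ID\<^esub> y = y \<oplus>\<^bsub>ID\<^esub> x" by (auto simp: ID_simps R.a_comm M.a_comm)
  next
    show "\<zero>\<^bsub>ID\<^esub> \<in> carrier ID" by (simp add: ID_simps)
  next
    fix x assume x: "x \<in> carrier ID"
    then show "\<zero>\<^bsub>ID\<^esub> \<oplus>\<^bsub>ID\<^esub> x = x" by (auto simp: ID_simps)
    show "\<exists>y\<in>carrier ID. y \<oplus>\<^bsub>ID\<^esub> x = \<zero>\<^bsub>ID\<^esub>"
      using x by (intro bexI[of _ "(\<ominus> fst x, \<ominus>\<^bsub>M\<^esub> snd x)"]) (auto simp: ID_simps R.l_neg M.l_neg)
  qed
  show "comm_monoid ID"
  proof (rule comm_monoidI)
    fix x y z assume x: "x \<in> carrier ID" and y: "y \<in> carrier ID" and z: "z \<in> carrier ID"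
    then show "x \<otimes>\<^bsub>ID\<^esub> y \<otimes>\<^bsub>ID\<^esub> z = x \<otimes>\<^bsub>ID\<^esub> (y \<otimes>\<^bsub>ID\<^esub> z)"
      by (auto simp: ID_simps R.m_assoc smult_r_distr smult_assoc1[symmetric] R.m_ac M.a_ac)
  next
    fix x y assume x: "x \<in> carrier ID" and y: "y \<in> carrier ID"
    then show "x \<otimes>\<^bsub>ID\<^esub> y \<in> carrier ID" by (auto simp: ID_simps)
    from x y show "x \<otimes>\<^bsub>ID\<^esub> y = y \<otimes>\<^bsub>ID\<^esub> x" by (auto simp: ID_simps R.m_comm M.a_comm)
  next
    show "\<one>\<^bsub>ID\<^esub> \<in> carrier ID" by (simp add: ID_simps)
  next
    fix x assume x: "x \<in> carrier ID"
    then show "\<one>\<^bsub>ID\<^esub> \<otimes>\<^bsub>ID\<^esub> x = x" by (auto simp: ID_simps)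
  qed
  fix x y z assume x: "x \<in> carrier ID" and y: "y \<in> carrier ID" and z: "z \<in> carrier ID"
  then show "(x \<oplus>\<^bsub>ID\<^esub> y) \<otimes>\<^bsub>ID\<^esub> z = x \<otimes>\<^bsub>ID\<^esub> z \<oplus>\<^bsub>ID\<^esub> y \<otimes>\<^bsub>ID\<^esub> z"
    by (auto simp: ID_simps R.l_distr smult_l_distr smult_r_distr M.a_ac)
qed


lemma ID_pow_fst: "x \<in> carrier ID \<Longrightarrow> fst (x [^]\<^bsub>ID\<^esub> (n::nat)) = fst x [^] n"
  by (induct n) (simp_all add: ID_simps)

lemma ID_nil: "nilradical ID = {p. fst p \<in> nilradical R \<and> snd p \<in> carrier M}"
proof -
  interpret T: cring ID by (rule ID_cring)
  have "p \<in> nilradical ID \<longleftrightarrow> fst p \<in> nilradical R \<and> snd p \<in> carrier M" for p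
  proof
    assume "p \<in> nilradical ID"
    then obtain n where p: "p \<in> carrier ID" "p [^]\<^bsub>ID\<^esub> (n::nat) = \<zero>\<^bsub>ID\<^esub>" unfolding nilradical_def by auto
    have "fst p [^] n = \<zero>" using ID_pow_fst[OF p(1), of n] p(2) by (simp add: ID_simps)
    then show "fst p \<in> nilradical R \<and> snd p \<in> carrier M" using p(1) unfolding nilradical_def ID_simps by auto
  next
    assume h: "fst p \<in> nilradical R \<and> snd p \<in> carrier M"
    then obtain n where n: "fst p \<in> carrier R" "fst p [^] (n::nat) = \<zero>" unfolding nilradical_def by auto
    have pc: "p \<in> carrier ID" using h n by (cases p) (simp add: ID_simps)
    define q where "q = p [^]\<^bsub>ID\<^esub> n"
    have qc: "q \<in> carrier ID" unfolding q_def using pc by simp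
    have q1: "fst q = \<zero>" unfolding q_def using ID_pow_fst[OF pc] n by simp
    have "p [^]\<^bsub>ID\<^esub> (n * 2) = q [^]\<^bsub>ID\<^esub> (2::nat)" unfolding q_def using pc by (simp add: T.nat_pow_pow)
    also have "\<dots> = q \<otimes>\<^bsub>ID\<^esub> q" using qc by (simp add: numeral_2_eq_2)
    also have "\<dots> = \<zero>\<^bsub>ID\<^esub>" using q1 qc by (simp add: ID_simps mem_Times_iff)
    finally show "p \<in> nilradical ID" using pc unfolding nilradical_def by blast
  qed
  then show ?thesis by blast
qed

lemma ID_areg: "(r, m) \<in> areg ID \<longleftrightarrow> r \<in> areg R \<and> m \<in> carrier M"
proof -
  have "(r, m) \<in> areg ID \<longleftrightarrow> (r, m) \<in> carrier ID \<and>
     (\<forall>y\<in>carrier ID. (r, m) \<otimes>\<^bsub>ID\<^esub> y \<in> nilradical ID \<longrightarrow> y \<in> nilradical ID)"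
    using cring.areg_char[OF ID_cring] by blast
  also have "\<dots> \<longleftrightarrow> r \<in> carrier R \<and> m \<in> carrier M \<and>
     (\<forall>y\<in>carrier R. r \<otimes> y \<in> nilradical R \<longrightarrow> y \<in> nilradical R)"
  proof (intro iffI conjI)
    assume h: "(r, m) \<in> carrier ID \<and>
     (\<forall>y\<in>carrier ID. (r, m) \<otimes>\<^bsub>ID\<^esub> y \<in> nilradical ID \<longrightarrow> y \<in> nilradical ID)"
    then show r: "r \<in> carrier R" and m: "m \<in> carrier M" by (auto simp: ID_simps)
    show "\<forall>y\<in>carrier R. r \<otimes> y \<in> nilradical R \<longrightarrow> y \<in> nilradical R"
    proof (intro ballI impI)
      fix y assume y: "y \<in> carrier R" and ry: "r \<otimes> y \<in> nilradical R"
      have "(r, m) \<otimes>\<^bsub>ID\<^esub> (y, \<zero>\<^bsub>M\<^esub>) \<in> nilradical ID" using ry r m y by (simp add: ID_nil ID_simps)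
      moreover have "(y, \<zero>\<^bsub>M\<^esub>) \<in> carrier ID" using y by (simp add: ID_simps)
      ultimately have "(y, \<zero>\<^bsub>M\<^esub>) \<in> nilradical ID" using h by blast
      then show "y \<in> nilradical R" by (simp add: ID_nil)
    qed
  next
    assume h: "r \<in> carrier R \<and> m \<in> carrier M \<and>
     (\<forall>y\<in>carrier R. r \<otimes> y \<in> nilradical R \<longrightarrow> y \<in> nilradical R)"
    then show "(r, m) \<in> carrier ID" by (simp add: ID_simps)
    show "\<forall>y\<in>carrier ID. (r, m) \<otimes>\<^bsub>ID\<^esub> y \<in> nilradical ID \<longrightarrow> y \<in> nilradical ID"
    proof (intro ballI impI)
      fix y assume y: "y \<in> carrier ID" and ry: "(r, m) \<otimes>\<^bsub>ID\<^esub> y \<in> nilradical ID"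
      have "r \<otimes> fst y \<in> nilradical R" using ry by (simp add: ID_nil ID_simps)
      moreover have "fst y \<in> carrier R" "snd y \<in> carrier M" using y by (auto simp: ID_simps)
      ultimately show "y \<in> nilradical ID" using h by (simp add: ID_nil)
    qed
  qed
  also have "\<dots> \<longleftrightarrow> r \<in> areg R \<and> m \<in> carrier M" using areg_char by blast
  finally show ?thesis .
qed

lemma ID_main: "roughly_complemented ID \<longleftrightarrow> roughly_complemented R \<and> atorsion R M"
proof
  assume rc: "roughly_complemented ID"
  have rc': "\<forall>a\<in>carrier ID. \<exists>b\<in>carrier ID. a \<otimes>\<^bsub>ID\<^esub> b = \<zero>\<^bsub>ID\<^esub> \<and> a \<oplus>\<^bsub>ID\<^esub> b \<in> areg ID"
    using rc unfolding roughly_complemented_def by blast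
  show "roughly_complemented R \<and> atorsion R M"
  proof
    show "roughly_complemented R" unfolding roughly_complemented_def
    proof
      fix r assume r: "r \<in> carrier R"
      have "(r, \<zero>\<^bsub>M\<^esub>) \<in> carrier ID" using r by (simp add: ID_simps)
      then obtain b where b: "b \<in> carrier ID" "(r, \<zero>\<^bsub>M\<^esub>) \<otimes>\<^bsub>ID\<^esub> b = \<zero>\<^bsub>ID\<^esub>"
        "(r, \<zero>\<^bsub>M\<^esub>) \<oplus>\<^bsub>ID\<^esub> b \<in> areg ID" using rc' by blast
      obtain r' m' where b': "b = (r', m')" "r' \<in> carrier R" "m' \<in> carrier M" using b(1) by (auto simp: ID_simps)
      have "r \<otimes> r' = \<zero>" using b(2) b' by (simp add: ID_simps)
      moreover have "r \<oplus> r' \<in> areg R" using b(3) b' r by (simp add: ID_simps ID_areg)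
      ultimately show "\<exists>b\<in>carrier R. r \<otimes> b = \<zero> \<and> r \<oplus> b \<in> areg R" using b' by blast
    qed
    show "atorsion R M" unfolding atorsion_def
    proof
      fix m assume m: "m \<in> carrier M"
      have "(\<zero>, m) \<in> carrier ID" using m by (simp add: ID_simps)
      then obtain b where b: "b \<in> carrier ID" "(\<zero>, m) \<otimes>\<^bsub>ID\<^esub> b = \<zero>\<^bsub>ID\<^esub>"
        "(\<zero>, m) \<oplus>\<^bsub>ID\<^esub> b \<in> areg ID" using rc' by blast
      obtain r' m' where b': "b = (r', m')" "r' \<in> carrier R" "m' \<in> carrier M" using b(1) by (auto simp: ID_simps)
      have "r' \<odot>\<^bsub>M\<^esub> m = \<zero>\<^bsub>M\<^esub>" using b(2) b' m by (simp add: ID_simps)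
      moreover have "r' \<in> areg R" using b(3) b' m by (simp add: ID_simps ID_areg)
      ultimately show "\<exists>r\<in>areg R. r \<odot>\<^bsub>M\<^esub> m = \<zero>\<^bsub>M\<^esub>" by blast
    qed
  qed
next
  assume h: "roughly_complemented R \<and> atorsion R M"
  have rcR: "\<forall>a\<in>carrier R. \<exists>b\<in>carrier R. a \<otimes> b = \<zero> \<and> a \<oplus> b \<in> areg R"
    using h unfolding roughly_complemented_def by blast
  have at: "\<forall>m\<in>carrier M. \<exists>r\<in>areg R. r \<odot>\<^bsub>M\<^esub> m = \<zero>\<^bsub>M\<^esub>" using h unfolding atorsion_def by blast
  show "roughly_complemented ID" unfolding roughly_complemented_def
  proof
    fix a assume a: "a \<in> carrier ID"
    obtain r m where a': "a = (r, m)" "r \<in> carrier R" "m \<in> carrier M" using a by (auto simp: ID_simps)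
    obtain r' where r': "r' \<in> carrier R" "r \<otimes> r' = \<zero>" "r \<oplus> r' \<in> areg R" using rcR a'(2) by blast
    have "r' \<odot>\<^bsub>M\<^esub> m \<in> carrier M" using r'(1) a'(3) by simp
    then obtain t where t: "t \<in> areg R" "t \<odot>\<^bsub>M\<^esub> (r' \<odot>\<^bsub>M\<^esub> m) = \<zero>\<^bsub>M\<^esub>" using at by blast
    have tc: "t \<in> carrier R" using t(1) unfolding areg_char by blast
    have e1: "r \<otimes> (r' \<otimes> t) = \<zero>" using r' tc a'(2) by (simp add: R.m_assoc[symmetric])
    have e2: "(r' \<otimes> t) \<odot>\<^bsub>M\<^esub> m = \<zero>\<^bsub>M\<^esub>"
      using t(2) r'(1) tc a'(3) by (simp add: R.m_comm[of r' t] smult_assoc1)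
    have "a \<otimes>\<^bsub>ID\<^esub> (r' \<otimes> t, \<zero>\<^bsub>M\<^esub>) = \<zero>\<^bsub>ID\<^esub>" using a' e1 e2 r' tc by (simp add: ID_simps)
    moreover have "r \<oplus> r' \<otimes> t \<in> areg R" using areg_combine[OF a'(2) r'(1) tc r'(2) r'(3) t(1)] .
    then have "a \<oplus>\<^bsub>ID\<^esub> (r' \<otimes> t, \<zero>\<^bsub>M\<^esub>) \<in> areg ID" using a' by (simp add: ID_simps ID_areg)
    moreover have "(r' \<otimes> t, \<zero>\<^bsub>M\<^esub>) \<in> carrier ID" using r' tc by (simp add: ID_simps)
    ultimately show "\<exists>b\<in>carrier ID. a \<otimes>\<^bsub>ID\<^esub> b = \<zero>\<^bsub>ID\<^esub> \<and> a \<oplus>\<^bsub>ID\<^esub> b \<in> areg ID" by blast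
  qed
qed

end

theorem mainTheorem18:
  fixes T :: "('a, 'b) ring_scheme" and S I :: "'a set"
    and R :: "('r, 'c) ring_scheme" and M :: "('r, 'm, 'd) module_scheme"
  shows "(cring T \<and> subring S T \<and> ideal I T \<and> I \<subseteq> nilradical T
          \<and> carrier T = S <+>\<^bsub>T\<^esub> I \<and> S \<inter> I = {\<zero>\<^bsub>T\<^esub>} \<longrightarrow>
          (roughly_complemented (T\<lparr>carrier := S\<rparr>) \<and> atorsion (T\<lparr>carrier := S\<rparr>) (ideal_as_module T I)
            \<longrightarrow> roughly_complemented T)
        \<and> ((\<forall>x \<in> I. \<forall>y \<in> I. x \<otimes>\<^bsub>T\<^esub> y = \<zero>\<^bsub>T\<^esub>) \<longrightarrow> roughly_complemented T
            \<longrightarrow> roughly_complemented (T\<lparr>carrier := S\<rparr>) \<and> atorsion (T\<lparr>carrier := S\<rparr>) (ideal_as_module T I)))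
       \<and> (cring R \<and> module R M \<longrightarrow>
            (roughly_complemented (idealization R M) \<longleftrightarrow> roughly_complemented R \<and> atorsion R M))"
proof (rule conjI)
  show "cring T \<and> subring S T \<and> ideal I T \<and> I \<subseteq> nilradical T
          \<and> carrier T = S <+>\<^bsub>T\<^esub> I \<and> S \<inter> I = {\<zero>\<^bsub>T\<^esub>} \<longrightarrow>
          (roughly_complemented (T\<lparr>carrier := S\<rparr>) \<and> atorsion (T\<lparr>carrier := S\<rparr>) (ideal_as_module T I)
            \<longrightarrow> roughly_complemented T)
        \<and> ((\<forall>x \<in> I. \<forall>y \<in> I. x \<otimes>\<^bsub>T\<^esub> y = \<zero>\<^bsub>T\<^esub>) \<longrightarrow> roughly_complemented T
            \<longrightarrow> roughly_complemented (T\<lparr>carrier := S\<rparr>) \<and> atorsion (T\<lparr>carrier := S\<rparr>) (ideal_as_module T I))"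
  proof (rule impI)
    assume h: "cring T \<and> subring S T \<and> ideal I T \<and> I \<subseteq> nilradical T
          \<and> carrier T = S <+>\<^bsub>T\<^esub> I \<and> S \<inter> I = {\<zero>\<^bsub>T\<^esub>}"
    then have D: "decomp T S I" by (simp add: decomp_def decomp_axioms_def)
    show "(roughly_complemented (T\<lparr>carrier := S\<rparr>) \<and> atorsion (T\<lparr>carrier := S\<rparr>) (ideal_as_module T I)
            \<longrightarrow> roughly_complemented T)
        \<and> ((\<forall>x \<in> I. \<forall>y \<in> I. x \<otimes>\<^bsub>T\<^esub> y = \<zero>\<^bsub>T\<^esub>) \<longrightarrow> roughly_complemented T
            \<longrightarrow> roughly_complemented (T\<lparr>carrier := S\<rparr>) \<and> atorsion (T\<lparr>carrier := S\<rparr>) (ideal_as_module T I))"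
      using decomp.forward[OF D] decomp.backward[OF D] by blast
  qed
  show "cring R \<and> module R M \<longrightarrow>
            (roughly_complemented (idealization R M) \<longleftrightarrow> roughly_complemented R \<and> atorsion R M)"
    using module.ID_main by blast
qed

end
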